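(* Let $(Y_1,\dots,Y_N)$ be multinomially distributed with $2N$ trials and $N$ categories each of probability $1/N$, and define $\xi_k^N=\frac1N\sum_{i=1}^N 1_{\{Y_i=k\}}$ for $0\le k\le 2N$ and $\xi_k^N=0$ for $k>2N$. Let $\mathcal{P}_k^2=e^{-2}2^k/k!$, $k\in\mathbb{N}_0$. Then for every $\varepsilon>0$, $$\mathbb{P}\Big\{\sum_{k=0}^\infty (k+1)^2\,|\xi_k^N-\mathcal{P}_k^2|>\varepsilon\Big\}\to0\quad\text{as }N\to\infty.$$ *)

theory Defs
  imports "HOL-Probability.Probability"
begin

text \<open>Multinomial distribution with n trials and m equiprobable categories
  (categories indexed 0..m-1): the law of the vector of category counts of
  n independent uniform draws from {0..<m}.\<close>
definition multinomial_pmf :: "nat \<Rightarrow> nat \<Rightarrow> (nat \<Rightarrow> nat) pmf" where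
  "multinomial_pmf n m =
     map_pmf (\<lambda>f i. if i < m then card {j \<in> {..<n}. f j = i} else 0)
       (pmf_of_set (PiE {..<n} (\<lambda>_. {..<m})))"

definition xi :: "nat \<Rightarrow> (nat \<Rightarrow> nat) \<Rightarrow> nat \<Rightarrow> real" where
  "xi N Y k = (if k \<le> 2 * N then (1 / real N) * real (card {i \<in> {..<N}. Y i = k}) else 0)"

definition poisson2 :: "nat \<Rightarrow> real" where
  "poisson2 k = exp (-2) * 2 ^ k / fact k"

end

theory Submission
  imports Defs
begin


definition Om :: "nat \<Rightarrow> nat \<Rightarrow> (nat \<Rightarrow> nat) set" where
  "Om n N = PiE {..<n} (\<lambda>_. {..<N})"
definition cnt :: "nat \<Rightarrow> (nat\<Rightarrow>nat) \<Rightarrow> nat \<Rightarrow> nat" where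
  "cnt n f i = card {j \<in> {..<n}. f j = i}"

lemma finite_Om[simp]: "finite (Om n N)"
  unfolding Om_def by (simp add: finite_PiE)

lemma card_Om: "card (Om n N) = N ^ n"
  unfolding Om_def by (simp add: card_PiE)

lemma piece1:
  assumes "i < N" "A \<subseteq> {..<n}"
  shows "{f \<in> Om n N. {j\<in>{..<n}. f j = i} = A} = PiE {..<n} (\<lambda>j. if j \<in> A then {i} else {..<N} - {i})"
proof (intro equalityI subsetI)
  fix f assume "f \<in> {f \<in> Om n N. {j\<in>{..<n}. f j = i} = A}"
  then have f: "f \<in> Om n N" "\<And>j. j < n \<Longrightarrow> f j = i \<longleftrightarrow> j \<in> A" by auto
  show "f \<in> PiE {..<n} (\<lambda>j. if j \<in> A then {i} else {..<N} - {i})"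
    using f assms unfolding Om_def PiE_iff by auto
next
  fix f assume f: "f \<in> PiE {..<n} (\<lambda>j. if j \<in> A then {i} else {..<N} - {i})"
  then have "f \<in> Om n N" using assms unfolding Om_def PiE_iff by (auto split: if_splits)
  moreover have "{j\<in>{..<n}. f j = i} = A" using f assms unfolding PiE_iff by (auto split: if_splits)
  ultimately show "f \<in> {f \<in> Om n N. {j\<in>{..<n}. f j = i} = A}" by simp
qed

lemma prod_if_const: "finite J \<Longrightarrow> A \<subseteq> J \<Longrightarrow> (\<Prod>j\<in>J. if j \<in> A then 1 else (c::nat)) = c ^ (card J - card A)"
proof -
  assume J: "finite J" "A \<subseteq> J"
  have "(\<Prod>j\<in>J. if j \<in> A then 1 else c) = (\<Prod>j\<in>J - A. c)"
    using J by (subst prod.If_cases) (auto simp: Int_absorb1 Diff_eq)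
  also have "\<dots> = c ^ (card J - card A)" using J by (simp add: card_Diff_subset finite_subset)
  finally show ?thesis .
qed

lemma card_piece1:
  assumes "i < N" "A \<subseteq> {..<n}"
  shows "card {f \<in> Om n N. {j\<in>{..<n}. f j = i} = A} = (N - 1) ^ (n - card A)"
proof -
  have "card {f \<in> Om n N. {j\<in>{..<n}. f j = i} = A} = (\<Prod>j<n. card (if j \<in> A then {i} else {..<N} - {i}))"
    unfolding piece1[OF assms] by (simp add: card_PiE)
  also have "\<dots> = (\<Prod>j<n. if j \<in> A then 1 else N - 1)"
    using assms by (intro prod.cong) auto
  also have "\<dots> = (N - 1) ^ (n - card A)" using assms by (simp add: prod_if_const)
  finally show ?thesis .
qed

lemma count1:
  assumes "i < N"
  shows "card {f \<in> Om n N. cnt n f i = k} = (n choose k) * (N - 1) ^ (n - k)"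
proof -
  let ?F = "{A. A \<subseteq> {..<n} \<and> card A = k}"
  have eq: "{f \<in> Om n N. cnt n f i = k} = (\<Union>A\<in>?F. {f \<in> Om n N. {j\<in>{..<n}. f j = i} = A})"
    unfolding cnt_def by auto
  have fin: "finite ?F" by (rule finite_subset[of _ "Pow {..<n}"]) auto
  have "card {f \<in> Om n N. cnt n f i = k} = (\<Sum>A\<in>?F. card {f \<in> Om n N. {j\<in>{..<n}. f j = i} = A})"
    unfolding eq by (rule card_UN_disjoint[OF fin]) auto
  also have "\<dots> = (\<Sum>A\<in>?F. (N - 1) ^ (n - k))"
    using assms card_piece1 by (intro sum.cong) auto
  also have "\<dots> = (n choose k) * (N - 1) ^ (n - k)"
    using n_subsets[of "{..<n}" k] by simp
  finally show ?thesis .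
qed

lemma piece2:
  assumes "i < N" "i' < N" "i \<noteq> i'" "A \<subseteq> {..<n}" "B \<subseteq> {..<n}" "A \<inter> B = {}"
  shows "{f \<in> Om n N. {j\<in>{..<n}. f j = i} = A \<and> {j\<in>{..<n}. f j = i'} = B} =
     PiE {..<n} (\<lambda>j. if j \<in> A then {i} else if j \<in> B then {i'} else {..<N} - {i, i'})"
proof (intro equalityI subsetI)
  fix f assume "f \<in> {f \<in> Om n N. {j\<in>{..<n}. f j = i} = A \<and> {j\<in>{..<n}. f j = i'} = B}"
  then have f: "f \<in> Om n N" "\<And>j. j < n \<Longrightarrow> f j = i \<longleftrightarrow> j \<in> A" "\<And>j. j < n \<Longrightarrow> f j = i' \<longleftrightarrow> j \<in> B" by auto
  show "f \<in> PiE {..<n} (\<lambda>j. if j \<in> A then {i} else if j \<in> B then {i'} else {..<N} - {i, i'})"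
    using f assms unfolding Om_def PiE_iff by auto
next
  fix f assume f: "f \<in> PiE {..<n} (\<lambda>j. if j \<in> A then {i} else if j \<in> B then {i'} else {..<N} - {i, i'})"
  then have "f \<in> Om n N" using assms unfolding Om_def PiE_iff by (auto split: if_splits)
  moreover have "{j\<in>{..<n}. f j = i} = A" using f assms unfolding PiE_iff by (auto split: if_splits)
  moreover have "{j\<in>{..<n}. f j = i'} = B" using f assms unfolding PiE_iff by (auto split: if_splits)
  ultimately show "f \<in> {f \<in> Om n N. {j\<in>{..<n}. f j = i} = A \<and> {j\<in>{..<n}. f j = i'} = B}" by simp
qed

lemma card_piece2:
  assumes "i < N" "i' < N" "i \<noteq> i'" "A \<subseteq> {..<n}" "B \<subseteq> {..<n}" "A \<inter> B = {}"
  shows "card {f \<in> Om n N. {j\<in>{..<n}. f j = i} = A \<and> {j\<in>{..<n}. f j = i'} = B} = (N - 2) ^ (n - card (A \<union> B))"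
proof -
  have "card {f \<in> Om n N. {j\<in>{..<n}. f j = i} = A \<and> {j\<in>{..<n}. f j = i'} = B}
     = (\<Prod>j<n. card (if j \<in> A then {i} else if j \<in> B then {i'} else {..<N} - {i, i'}))"
    unfolding piece2[OF assms] by (simp add: card_PiE)
  also have "\<dots> = (\<Prod>j<n. if j \<in> A \<union> B then 1 else N - 2)"
    using assms by (intro prod.cong) (auto simp: card_Diff_subset)
  also have "\<dots> = (N - 2) ^ (n - card (A \<union> B))" using assms prod_if_const[of "{..<n}" "A \<union> B" "N - 2"] by simp
  finally show ?thesis .
qed

lemma count2:
  assumes "i < N" "i' < N" "i \<noteq> i'"
  shows "card {f \<in> Om n N. cnt n f i = k \<and> cnt n f i' = k} = (n choose k) * ((n - k) choose k) * (N - 2) ^ (n - 2 * k)"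
proof -
  let ?F = "{A. A \<subseteq> {..<n} \<and> card A = k}"
  let ?G = "\<lambda>A. {B. B \<subseteq> {..<n} - A \<and> card B = k}"
  let ?P = "\<lambda>(A,B). {f \<in> Om n N. {j\<in>{..<n}. f j = i} = A \<and> {j\<in>{..<n}. f j = i'} = B}"
  have eq: "{f \<in> Om n N. cnt n f i = k \<and> cnt n f i' = k} = (\<Union>p\<in>Sigma ?F ?G. ?P p)"
  proof (intro equalityI subsetI)
    fix f assume f: "f \<in> {f \<in> Om n N. cnt n f i = k \<and> cnt n f i' = k}"
    let ?A = "{j\<in>{..<n}. f j = i}" and ?B = "{j\<in>{..<n}. f j = i'}"
    have "(?A, ?B) \<in> Sigma ?F ?G" using f assms unfolding cnt_def by auto
    moreover have "f \<in> ?P (?A, ?B)" using f by auto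
    ultimately show "f \<in> (\<Union>p\<in>Sigma ?F ?G. ?P p)" by blast
  qed (auto simp: cnt_def)
  have finF: "finite ?F" by (rule finite_subset[of _ "Pow {..<n}"]) auto
  have finS: "finite (Sigma ?F ?G)"
    by (rule finite_SigmaI[OF finF], rule finite_subset[of _ "Pow {..<n}"]) auto
  have "card {f \<in> Om n N. cnt n f i = k \<and> cnt n f i' = k} = (\<Sum>p\<in>Sigma ?F ?G. card (?P p))"
    unfolding eq by (rule card_UN_disjoint[OF finS]) auto
  also have "\<dots> = (\<Sum>p\<in>Sigma ?F ?G. (N - 2) ^ (n - 2 * k))"
  proof (intro sum.cong refl)
    fix p assume "p \<in> Sigma ?F ?G"
    then obtain A B where p: "p = (A, B)" "A \<subseteq> {..<n}" "card A = k" "B \<subseteq> {..<n} - A" "card B = k" by auto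
    have "card (A \<union> B) = 2 * k" using p by (subst card_Un_disjoint) (auto intro: finite_subset)
    then show "card (?P p) = (N - 2) ^ (n - 2 * k)" using p assms card_piece2[of i N i' A n B] by auto
  qed
  also have "\<dots> = card (Sigma ?F ?G) * (N - 2) ^ (n - 2 * k)" by simp
  also have "card (Sigma ?F ?G) = (\<Sum>A\<in>?F. card (?G A))"
    using finF by (intro card_SigmaI) (auto intro: finite_subset[of _ "Pow {..<n}"])
  also have "\<dots> = (\<Sum>A\<in>?F. (n - k) choose k)"
  proof (intro sum.cong refl)
    fix A assume "A \<in> ?F"
    then have "card ({..<n} - A) = n - k" by (auto simp: card_Diff_subset finite_subset)
    then show "card (?G A) = (n - k) choose k" using n_subsets[of "{..<n} - A" k] by simp
  qed
  also have "\<dots> = (n choose k) * ((n - k) choose k)" using n_subsets[of "{..<n}" k] by simp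
  finally show ?thesis by simp
qed

definition Ck :: "nat \<Rightarrow> nat \<Rightarrow> (nat \<Rightarrow> nat) \<Rightarrow> nat \<Rightarrow> nat" where
  "Ck n N f k = card {i \<in> {..<N}. cnt n f i = k}"

lemma card_filter_sum: "finite I \<Longrightarrow> card {i \<in> I. P i} = (\<Sum>i\<in>I. if P i then 1 else 0)"
  by (simp add: sum.inter_filter[symmetric])

lemma sum_card_swap:
  assumes "finite A" "finite I"
  shows "(\<Sum>a\<in>A. card {i\<in>I. P a i}) = (\<Sum>i\<in>I. card {a\<in>A. P a i})"
  using assms by (simp add: card_filter_sum sum.swap[of _ A])

lemma cnt_le: "cnt n f i \<le> n"
  unfolding cnt_def by (rule order.trans[OF card_mono[of "{..<n}"]]) auto

lemma sumE1: "(\<Sum>f\<in>Om n N. Ck n N f k) = (\<Sum>i<N. card {f\<in>Om n N. cnt n f i = k})"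
  unfolding Ck_def by (rule sum_card_swap) auto

lemma E1: "(\<Sum>f\<in>Om n N. Ck n N f k) = N * ((n choose k) * (N - 1) ^ (n - k))"
  unfolding sumE1 by (simp add: count1)

lemma sq_card_filter: "finite I \<Longrightarrow> card {i\<in>I. P i} ^ 2 = card {p \<in> I \<times> I. P (fst p) \<and> P (snd p)}"
proof -
  assume I: "finite I"
  have "{p \<in> I \<times> I. P (fst p) \<and> P (snd p)} = {i\<in>I. P i} \<times> {i\<in>I. P i}" by auto
  then show ?thesis by (simp add: power2_eq_square card_cartesian_product)
qed

lemma sum_pairs:
  assumes "finite I"
  shows "(\<Sum>p\<in>I \<times> I. if fst p = snd p then (c1::nat) else c2) = card I * (c1 + (card I - 1) * c2)"
proof -
  have "(\<Sum>p\<in>I \<times> I. if fst p = snd p then c1 else c2) = (\<Sum>i\<in>I. \<Sum>i'\<in>I. if i = i' then c1 else c2)"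
    by (subst sum.cartesian_product) (simp add: case_prod_beta')
  also have "\<dots> = (\<Sum>i\<in>I. c1 + (card I - 1) * c2)"
  proof (intro sum.cong refl)
    fix i assume i: "i \<in> I"
    have "(\<Sum>i'\<in>I. if i = i' then c1 else c2) = (if i = i then c1 else c2) + (\<Sum>i'\<in>I - {i}. if i = i' then c1 else c2)"
      using assms i by (rule sum.remove)
    also have "(\<Sum>i'\<in>I - {i}. if i = i' then c1 else c2) = (\<Sum>i'\<in>I - {i}. c2)" by (intro sum.cong) auto
    finally show "(\<Sum>i'\<in>I. if i = i' then c1 else c2) = c1 + (card I - 1) * c2"
      using assms i by simp
  qed
  finally show ?thesis by simp
qed

lemma E2: "(\<Sum>f\<in>Om n N. Ck n N f k ^ 2) =
   N * ((n choose k) * (N - 1) ^ (n - k) + (N - 1) * ((n choose k) * ((n - k) choose k) * (N - 2) ^ (n - 2 * k)))"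
proof -
  have "(\<Sum>f\<in>Om n N. Ck n N f k ^ 2) = (\<Sum>f\<in>Om n N. card {p \<in> {..<N} \<times> {..<N}. cnt n f (fst p) = k \<and> cnt n f (snd p) = k})"
    unfolding Ck_def by (intro sum.cong refl sq_card_filter) auto
  also have "\<dots> = (\<Sum>p\<in>{..<N} \<times> {..<N}. card {f \<in> Om n N. cnt n f (fst p) = k \<and> cnt n f (snd p) = k})"
    by (rule sum_card_swap) auto
  also have "\<dots> = (\<Sum>p\<in>{..<N} \<times> {..<N}. if fst p = snd p then (n choose k) * (N - 1) ^ (n - k)
        else (n choose k) * ((n - k) choose k) * (N - 2) ^ (n - 2 * k))"
    by (intro sum.cong refl) (auto simp: count1 count2)
  also have "\<dots> = N * ((n choose k) * (N - 1) ^ (n - k) + (N - 1) * ((n choose k) * ((n - k) choose k) * (N - 2) ^ (n - 2 * k)))"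
    by (subst sum_pairs) auto
  finally show ?thesis .
qed

lemma weighted_Ck:
  fixes w :: "nat \<Rightarrow> real"
  shows "(\<Sum>k\<le>n. w k * real (Ck n N f k)) = (\<Sum>i<N. w (cnt n f i))"
proof -
  have "(\<Sum>k\<le>n. w k * real (Ck n N f k)) = (\<Sum>k\<le>n. \<Sum>i<N. if cnt n f i = k then w k else 0)"
  proof (intro sum.cong refl)
    fix k
    have "real (Ck n N f k) = (\<Sum>i<N. if cnt n f i = k then 1 else 0)"
      unfolding Ck_def by (subst card_filter_sum) (auto simp: of_nat_sum if_distrib cong: if_cong)
    then show "w k * real (Ck n N f k) = (\<Sum>i<N. if cnt n f i = k then w k else 0)"
      by (simp add: sum_distrib_left if_distrib cong: if_cong)
  qed
  also have "\<dots> = (\<Sum>i<N. \<Sum>k\<le>n. if cnt n f i = k then w k else 0)" by (rule sum.swap)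
  also have "\<dots> = (\<Sum>i<N. w (cnt n f i))"
    using cnt_le[of n f] by (intro sum.cong refl) (auto simp: sum.delta')
  finally show ?thesis .
qed

lemma pow2_cnt: "(2::nat) ^ cnt n f i = (\<Prod>j<n. if f j = i then 2 else 1)"
proof -
  have "(\<Prod>j<n. if f j = i then (2::nat) else 1) = (\<Prod>j\<in>{j\<in>{..<n}. f j = i}. 2)"
    by (simp add: prod.If_cases Int_def)
  then show ?thesis by (simp add: cnt_def)
qed

lemma E3: "i < N \<Longrightarrow> (\<Sum>f\<in>Om n N. (2::nat) ^ cnt n f i) = (N + 1) ^ n"
proof -
  assume i: "i < N"
  have "(\<Sum>f\<in>Om n N. (2::nat) ^ cnt n f i) = (\<Sum>f\<in>Om n N. \<Prod>j<n. if f j = i then 2 else 1)"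
    by (simp add: pow2_cnt)
  also have "\<dots> = (\<Prod>j<n. \<Sum>y<N. if y = i then 2 else 1)"
    unfolding Om_def by (rule prod_sum_PiE[symmetric]) auto
  also have "(\<Sum>y<N. if y = i then (2::nat) else 1) = N + 1"
  proof -
    have "(\<Sum>y<N. if y = i then (2::nat) else 1) = (\<Sum>y<N. 1) + (\<Sum>y<N. if y = i then 1 else 0)"
      unfolding sum.distrib[symmetric] by (intro sum.cong) auto
    then show ?thesis using i by simp
  qed
  finally show ?thesis by simp
qed



lemma binom_real: "real (m choose k) = (\<Prod>i<k. real m - real i) / fact k"
proof -
  have "real (m choose k) * fact k = (\<Prod>i = 0..<k. real m - of_nat i)"
    unfolding binomial_gbinomial by (rule gbinomial_mult_fact')
  then show ?thesis by (simp add: field_simps atLeast0LessThan)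
qed

lemma binom_lim:
  assumes "(\<lambda>N. real (g N) / real N) \<longlonglongrightarrow> c"
  shows "(\<lambda>N. real (g N choose k) / real N ^ k) \<longlonglongrightarrow> c ^ k / fact k"
proof -
  have eq: "real (g N choose k) / real N ^ k = (\<Prod>i<k. real (g N) / real N - real i / real N) / fact k" for N
  proof -
    have "(\<Prod>i<k. real (g N) / real N - real i / real N) = (\<Prod>i<k. (real (g N) - real i) / real N)"
      by (intro prod.cong) (auto simp: diff_divide_distrib)
    also have "\<dots> = (\<Prod>i<k. real (g N) - real i) / real N ^ k" by (simp add: prod_dividef)
    finally show ?thesis by (simp add: binom_real)
  qed
  have "(\<lambda>N. (\<Prod>i<k. real (g N) / real N - real i / real N) / fact k) \<longlonglongrightarrow> (\<Prod>i<k. c - 0) / fact k"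
    by (intro tendsto_intros assms) auto
  then show ?thesis by (simp add: eq)
qed

lemma lim_2N: "(\<lambda>N. real (2 * N) / real N) \<longlonglongrightarrow> 2"
proof (rule Lim_transform_eventually[OF tendsto_const])
  show "\<forall>\<^sub>F N in sequentially. 2 = real (2 * N) / real N"
    by (rule eventually_sequentiallyI[of 1]) auto
qed

lemma lim_2Nk: "(\<lambda>N. real (2 * N - k) / real N) \<longlonglongrightarrow> 2"
proof -
  have "(\<lambda>N. 2 - real k / real N) \<longlonglongrightarrow> 2 - 0" by (intro tendsto_intros)
  moreover have "\<forall>\<^sub>F N in sequentially. 2 - real k / real N = real (2 * N - k) / real N"
    by (rule eventually_sequentiallyI[of "k + 1"]) (auto simp: of_nat_diff field_simps)
  ultimately show ?thesis by (auto intro: Lim_transform_eventually)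
qed

lemma lim_exp1: "(\<lambda>N. ((1 - 1 / real N) ^ N) ^ 2) \<longlonglongrightarrow> exp (-2)"
proof -
  have "(\<lambda>N. (1 + (-1) / real N) ^ N) \<longlonglongrightarrow> exp (-1)" by (rule tendsto_exp_limit_sequentially)
  then have "(\<lambda>N. ((1 + (-1) / real N) ^ N) ^ 2) \<longlonglongrightarrow> exp (-1) ^ 2" by (intro tendsto_intros)
  moreover have "exp (-1::real) ^ 2 = exp (-2)" by (simp add: power2_eq_square exp_add[symmetric])
  ultimately show ?thesis by simp
qed

lemma lim_exp2: "(\<lambda>N. ((1 - 2 / real N) ^ N) ^ 2) \<longlonglongrightarrow> exp (-4)"
proof -
  have "(\<lambda>N. (1 + (-2) / real N) ^ N) \<longlonglongrightarrow> exp (-2)" by (rule tendsto_exp_limit_sequentially)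
  then have "(\<lambda>N. ((1 + (-2) / real N) ^ N) ^ 2) \<longlonglongrightarrow> exp (-2) ^ 2" by (intro tendsto_intros)
  moreover have "exp (-2::real) ^ 2 = exp (-4)" by (simp add: power2_eq_square exp_add[symmetric])
  ultimately show ?thesis by simp
qed

definition pN :: "nat \<Rightarrow> nat \<Rightarrow> real" where
  "pN N k = real ((2*N) choose k) * real (N - 1) ^ (2*N - k) / real N ^ (2*N)"
definition qN :: "nat \<Rightarrow> nat \<Rightarrow> real" where
  "qN N k = real ((2*N) choose k) * real ((2*N - k) choose k) * real (N - 2) ^ (2*N - 2*k) / real N ^ (2*N)"

lemma alg1: "(M::real) \<noteq> 0 \<Longrightarrow> a * ((M ^ m / M ^ k) * (x ^ m / x ^ k)) / M ^ m = a / M ^ k * x ^ m / x ^ k"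
  by (simp add: field_simps)

lemma pN_eq:
  assumes "N \<ge> 2" "k \<le> 2 * N"
  shows "pN N k = (real ((2*N) choose k) / real N ^ k) * ((1 - 1 / real N) ^ N) ^ 2 / (1 - 1 / real N) ^ k"
proof -
  have N: "real N > 1" using assms by simp
  have a: "real (N - 1) = real N * (1 - 1 / real N)" using N by (simp add: of_nat_diff field_simps)
  have nz: "1 - 1 / real N \<noteq> 0" using N by simp
  have "real (N - 1) ^ (2*N - k) = real N ^ (2*N - k) * (1 - 1 / real N) ^ (2*N - k)"
    unfolding a by (simp add: power_mult_distrib)
  also have "\<dots> = (real N ^ (2*N) / real N ^ k) * ((1 - 1 / real N) ^ (2*N) / (1 - 1 / real N) ^ k)"
    using assms N nz by (simp add: power_diff)
  finally have "real (N - 1) ^ (2*N - k) = (real N ^ (2*N) / real N ^ k) * ((1 - 1 / real N) ^ (2*N) / (1 - 1 / real N) ^ k)" .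
  then show ?thesis unfolding pN_def using N
    using alg1[of "real N" "real (2 * N choose k)" "2 * N" k "1 - 1 / real N"] N
    by (simp add: power_mult[symmetric] mult.commute[of N 2])
qed

lemma qN_eq:
  assumes "N \<ge> 3" "k \<le> N"
  shows "qN N k = (real ((2*N) choose k) / real N ^ k) * (real ((2*N - k) choose k) / real N ^ k) *
     ((1 - 2 / real N) ^ N) ^ 2 / (1 - 2 / real N) ^ (2 * k)"
proof -
  have N: "real N > 2" using assms by simp
  have a: "real (N - 2) = real N * (1 - 2 / real N)" using N by (simp add: of_nat_diff field_simps)
  have nz: "1 - 2 / real N \<noteq> 0" using N by simp
  have "real (N - 2) ^ (2*N - 2*k) = real N ^ (2*N - 2*k) * (1 - 2 / real N) ^ (2*N - 2*k)"
    unfolding a by (simp add: power_mult_distrib)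
  also have "\<dots> = (real N ^ (2*N) / real N ^ (2*k)) * ((1 - 2 / real N) ^ (2*N) / (1 - 2 / real N) ^ (2*k))"
    using assms N nz by (simp add: power_diff)
  finally have e: "real (N - 2) ^ (2*N - 2*k) = (real N ^ (2*N) / real N ^ (2*k)) * ((1 - 2 / real N) ^ (2*N) / (1 - 2 / real N) ^ (2*k))" .
    have h1: "real N ^ k * real N ^ k = real N ^ (2*k)" by (simp add: power_add[symmetric] mult_2)
    have h2: "((1 - 2/real N)^N)^2 = (1-2/real N)^(2*N)" by (simp add: power_mult[symmetric] mult.commute)
    have "(real ((2*N) choose k) / real N ^ k) * (real ((2*N - k) choose k) / real N ^ k) *
     ((1 - 2 / real N) ^ N) ^ 2 / (1 - 2 / real N) ^ (2 * k) = 
     real ((2*N) choose k) * real ((2*N - k) choose k) / real N ^ (2*k) * (1 - 2 / real N) ^ (2*N) / (1 - 2 / real N) ^ (2 * k)"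
      unfolding h2 h1[symmetric] by simp
    also have "\<dots> = qN N k"
      unfolding qN_def e using alg1[of "real N" "real (2 * N choose k) * real ((2*N - k) choose k)" "2 * N" "2 * k" "1 - 2 / real N"] N
      by simp
    finally show ?thesis by simp
qed

lemma lim_pN: "(\<lambda>N. pN N k) \<longlonglongrightarrow> poisson2 k"
proof -
  have "(\<lambda>N. (real ((2*N) choose k) / real N ^ k) * ((1 - 1 / real N) ^ N) ^ 2 / (1 - 1 / real N) ^ k)
     \<longlonglongrightarrow> (2 ^ k / fact k) * exp (-2) / (1 - 0) ^ k"
    by (intro tendsto_intros binom_lim lim_2N lim_exp1) auto
  then have "(\<lambda>N. (real ((2*N) choose k) / real N ^ k) * ((1 - 1 / real N) ^ N) ^ 2 / (1 - 1 / real N) ^ k)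
     \<longlonglongrightarrow> poisson2 k" by (simp add: poisson2_def mult_ac)
  moreover have "\<forall>\<^sub>F N in sequentially. (real ((2*N) choose k) / real N ^ k) * ((1 - 1 / real N) ^ N) ^ 2 / (1 - 1 / real N) ^ k = pN N k"
    by (rule eventually_sequentiallyI[of "k + 2"]) (simp add: pN_eq)
  ultimately show ?thesis by (rule Lim_transform_eventually)
qed

lemma lim_qN: "(\<lambda>N. qN N k) \<longlonglongrightarrow> poisson2 k ^ 2"
proof -
  let ?f = "\<lambda>N. (real ((2*N) choose k) / real N ^ k) * (real ((2*N - k) choose k) / real N ^ k) *
     ((1 - 2 / real N) ^ N) ^ 2 / (1 - 2 / real N) ^ (2 * k)"
  have "?f \<longlonglongrightarrow> (2 ^ k / fact k) * (2 ^ k / fact k) * exp (-4) / (1 - 0) ^ (2 * k)"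
    by (intro tendsto_intros binom_lim lim_2N lim_2Nk lim_exp2) auto
  then have "?f \<longlonglongrightarrow> poisson2 k ^ 2"
  proof -
    have "(2 ^ k / fact k) * (2 ^ k / fact k) * exp (-4) / (1 - 0) ^ (2 * k) = poisson2 k ^ 2"
      by (simp add: poisson2_def power2_eq_square exp_add[symmetric])
    then show ?thesis using \<open>?f \<longlonglongrightarrow> _\<close> by simp
  qed
  moreover have "\<forall>\<^sub>F N in sequentially. ?f N = qN N k"
    by (rule eventually_sequentiallyI[of "k + 3"]) (simp add: qN_eq)
  ultimately show ?thesis by (rule Lim_transform_eventually)
qed



lemma powb_cnt: "(b::nat) ^ cnt n f i = (\<Prod>j<n. if f j = i then b else 1)"
proof -
  have "(\<Prod>j<n. if f j = i then b else 1) = (\<Prod>j\<in>{j\<in>{..<n}. f j = i}. b)"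
    by (simp add: prod.If_cases Int_def)
  then show ?thesis by (simp add: cnt_def)
qed

lemma E3b: "i < N \<Longrightarrow> (\<Sum>f\<in>Om n N. (b::nat) ^ cnt n f i) = (N + (b - 1)) ^ n" if "b \<ge> 1"
proof -
  assume i: "i < N"
  have "(\<Sum>f\<in>Om n N. b ^ cnt n f i) = (\<Sum>f\<in>Om n N. \<Prod>j<n. if f j = i then b else 1)"
    by (simp add: powb_cnt)
  also have "\<dots> = (\<Prod>j<n. \<Sum>y<N. if y = i then b else 1)"
    unfolding Om_def by (rule prod_sum_PiE[symmetric]) auto
  also have "(\<Sum>y<N. if y = i then b else 1) = N + (b - 1)"
  proof -
    have "(\<Sum>y<N. if y = i then b else 1) = (\<Sum>y<N. 1) + (\<Sum>y<N. if y = i then b - 1 else 0)"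
      unfolding sum.distrib[symmetric] using that by (intro sum.cong) auto
    then show ?thesis using i by simp
  qed
  finally show ?thesis by simp
qed

lemma markov_card:
  assumes "finite A" "\<And>x. x \<in> A \<Longrightarrow> h x \<ge> 0" "c > (0::real)"
  shows "real (card {x\<in>A. c \<le> h x}) \<le> (\<Sum>x\<in>A. h x) / c"
proof -
  have "c * real (card {x\<in>A. c \<le> h x}) = (\<Sum>x\<in>{x\<in>A. c \<le> h x}. c)" by simp
  also have "\<dots> \<le> (\<Sum>x\<in>{x\<in>A. c \<le> h x}. h x)" by (rule sum_mono) auto
  also have "\<dots> \<le> (\<Sum>x\<in>A. h x)" by (rule sum_mono2) (use assms in auto)
  finally show ?thesis using assms(3) by (simp add: field_simps)
qed

definition Yf :: "nat \<Rightarrow> (nat \<Rightarrow> nat) \<Rightarrow> nat \<Rightarrow> nat" where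
  "Yf N f = (\<lambda>i. if i < N then card {j \<in> {..<2*N}. f j = i} else 0)"

lemma prob_eq:
  assumes "N \<ge> 1"
  shows "measure_pmf.prob (multinomial_pmf (2*N) N) X = real (card {f \<in> Om (2*N) N. Yf N f \<in> X}) / real N ^ (2*N)"
proof -
  have ne: "Om (2*N) N \<noteq> {}" using card_Om[of "2*N" N] assms by (metis card.empty le_numeral_extra(2) not_one_le_zero power_eq_0_iff)
  have "measure_pmf.prob (multinomial_pmf (2*N) N) X = measure_pmf.prob (pmf_of_set (Om (2*N) N)) (Yf N -` X)"
    unfolding multinomial_pmf_def Om_def Yf_def by simp
  also have "\<dots> = real (card (Om (2*N) N \<inter> Yf N -` X)) / real (card (Om (2*N) N))"
    using ne by (simp add: measure_pmf_of_set)
  also have "Om (2*N) N \<inter> Yf N -` X = {f \<in> Om (2*N) N. Yf N f \<in> X}" by auto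
  finally show ?thesis by (simp add: card_Om)
qed

definition sx :: "nat \<Rightarrow> (nat\<Rightarrow>nat) \<Rightarrow> nat \<Rightarrow> real" where
  "sx N f k = (if k \<le> 2*N then real (Ck (2*N) N f k) / real N else 0)"

lemma xi_Yf: "xi N (Yf N f) k = sx N f k"
proof -
  have "{i \<in> {..<N}. Yf N f i = k} = {i \<in> {..<N}. cnt (2*N) f i = k}"
    unfolding Yf_def cnt_def by auto
  then show ?thesis unfolding xi_def sx_def Ck_def by simp
qed

lemma sx_nonneg: "sx N f k \<ge> 0" unfolding sx_def by simp

definition w :: "nat \<Rightarrow> real" where "w k = (real k + 1)^2 * poisson2 k"

lemma poisson2_nonneg: "poisson2 k \<ge> 0" unfolding poisson2_def by simp

lemma sq_le_8: "(real k + 1) ^ 3 \<le> 8 ^ k"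
proof -
  have "Suc k \<le> 2 ^ k" using less_exp[of k] by linarith
  then have "real k + 1 \<le> 2 ^ k" by (metis of_nat_Suc of_nat_le_iff of_nat_numeral of_nat_power add.commute)
  then have "(real k + 1) ^ 3 \<le> (2 ^ k) ^ 3" by (intro power_mono) auto
  also have "\<dots> = 8 ^ k" by (simp add: power3_eq_cube power_mult_distrib[symmetric])
  finally show ?thesis .
qed

lemma sq_le_8': "(real k + 1) ^ 2 \<le> 8 ^ k"
proof -
  have "(real k + 1) ^ 2 \<le> (real k + 1) ^ 3" by (intro power_increasing) auto
  then show ?thesis using sq_le_8[of k] by linarith
qed

lemma summable_w: "summable w"
proof (rule summable_comparison_test)
  show "summable (\<lambda>k. exp (-2) * (inverse (fact k) * 16 ^ k) :: real)"
    by (intro summable_mult summable_exp)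
  show "\<exists>N. \<forall>n\<ge>N. norm (w n) \<le> exp (-2) * (inverse (fact n) * 16 ^ n)"
  proof (intro exI allI impI)
    fix n :: nat
    have "norm (w n) = (real n + 1)^2 * 2 ^ n * (exp (-2) * inverse (fact n))"
      unfolding w_def poisson2_def by (simp add: field_simps)
    also have "\<dots> \<le> 8 ^ n * 2 ^ n * (exp (-2) * inverse (fact n))"
      by (intro mult_right_mono sq_le_8') auto
    also have "\<dots> = exp (-2) * (inverse (fact n) * 16 ^ n)"
      by (simp add: power_mult_distrib[symmetric])
    finally show "norm (w n) \<le> exp (-2) * (inverse (fact n) * 16 ^ n)" .
  qed
qed

lemma S_bound:
  assumes "K \<le> 2*N"
  shows "(\<Sum>k. (real k + 1)^2 * \<bar>sx N f k - poisson2 k\<bar>) \<le>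
    (\<Sum>k\<le>K. (real k + 1)^2 * \<bar>sx N f k - poisson2 k\<bar>) +
    (\<Sum>k\<le>2*N. if K < k then (real k + 1)^2 * sx N f k else 0) + (\<Sum>i. w (i + Suc K))"
proof -
  define a where "a k = (real k + 1)^2 * \<bar>sx N f k - poisson2 k\<bar>" for k
  define u where "u k = (if k \<le> K then a k else if k \<le> 2*N then (real k + 1)^2 * sx N f k else 0)" for k
  define v where "v k = (if k \<le> K then 0 else w k)" for k
  have w0: "w k \<ge> 0" for k unfolding w_def using poisson2_nonneg by simp
  have a0: "a k \<ge> 0" for k unfolding a_def by simp
  have auv: "a k \<le> u k + v k" for k
  proof (cases "k \<le> K")
    case True then show ?thesis unfolding u_def v_def by simp
  next
    case False
    have "\<bar>sx N f k - poisson2 k\<bar> \<le> (if k \<le> 2*N then sx N f k else 0) + poisson2 k"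
      using sx_nonneg[of N f k] poisson2_nonneg[of k] by (cases "k \<le> 2*N") (auto simp: abs_le_iff, simp add: sx_def)
    then have "a k \<le> (real k + 1)^2 * ((if k \<le> 2*N then sx N f k else 0) + poisson2 k)"
      unfolding a_def by (intro mult_left_mono) auto
    then show ?thesis using False unfolding u_def v_def w_def by (auto simp: algebra_simps)
  qed
  have sv: "summable v"
    by (rule summable_comparison_test[OF _ summable_w]) (auto simp: v_def w0)
  have u_fin: "suminf u = (\<Sum>k\<le>2*N. u k)"
    by (rule suminf_finite) (use assms in \<open>auto simp: u_def\<close>)
  have su: "summable u" by (rule summable_finite[of "{..2*N}"]) (use assms in \<open>auto simp: u_def\<close>)
  have sa: "summable a"
    by (rule summable_comparison_test[OF _ summable_add[OF su sv]]) (use a0 auv in auto)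
  have 1: "suminf a \<le> suminf u + suminf v"
    using suminf_le[OF auv sa summable_add[OF su sv]] suminf_add[OF su sv] by simp
  have 2: "suminf v = (\<Sum>i. w (i + Suc K))"
  proof -
    have "suminf v = (\<Sum>n. v (n + Suc K)) + (\<Sum>i<Suc K. v i)" by (rule suminf_split_initial_segment[OF sv])
    also have "(\<Sum>i<Suc K. v i) = 0" by (auto simp: v_def)
    also have "(\<lambda>n. v (n + Suc K)) = (\<lambda>n. w (n + Suc K))" by (auto simp: v_def)
    finally show ?thesis by simp
  qed
  have 3: "(\<Sum>k\<le>2*N. u k) = (\<Sum>k\<le>2*N. if k \<le> K then a k else 0) + (\<Sum>k\<le>2*N. if K < k then (real k + 1)^2 * sx N f k else 0)"
    unfolding sum.distrib[symmetric] by (intro sum.cong) (auto simp: u_def)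
  have 4: "(\<Sum>k\<le>2*N. if k \<le> K then a k else 0) = (\<Sum>k\<le>K. a k)"
  proof -
    have "(\<Sum>k\<le>2*N. if k \<le> K then a k else 0) = (\<Sum>k\<in>{..2*N} \<inter> {k. k \<le> K}. a k)"
      by (simp add: sum.If_cases)
    also have "{..2*N} \<inter> {k. k \<le> K} = {..K}" using assms by auto
    finally show ?thesis .
  qed
  have "suminf a \<le> (\<Sum>k\<le>K. a k) + (\<Sum>k\<le>2*N. if K < k then (real k + 1)^2 * sx N f k else 0) + (\<Sum>i. w (i + Suc K))"
    using 1 2 3 4 u_fin by simp
  then show ?thesis unfolding a_def by simp
qed

definition V :: "nat \<Rightarrow> nat \<Rightarrow> real" where
  "V N k = (\<Sum>f\<in>Om (2*N) N. (sx N f k - poisson2 k)^2) / real N ^ (2*N)"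

lemma V_eq:
  assumes "N \<ge> 1" "k \<le> 2*N"
  shows "V N k = pN N k / real N + (1 - 1 / real N) * qN N k - 2 * poisson2 k * pN N k + poisson2 k ^ 2"
proof -
  let ?O = "Om (2*N) N"
  let ?P = "poisson2 k"
  let ?c = "\<lambda>f. real (Ck (2*N) N f k)"
  define M where "M = real N ^ (2*N)"
  have NP: "real N > 0" using assms by simp
  have M0: "M > 0" unfolding M_def using NP by simp
  have s1: "(\<Sum>f\<in>?O. ?c f) = real N * (real ((2*N) choose k) * real (N-1)^(2*N-k))"
    using arg_cong[OF E1[of "2*N" N k], of real] by (simp add: of_nat_sum)
  have s2: "(\<Sum>f\<in>?O. ?c f ^ 2) = real N * (real ((2*N) choose k) * real (N-1)^(2*N-k) +
      real (N-1) * (real ((2*N) choose k) * real ((2*N-k) choose k) * real (N-2)^(2*N-2*k)))"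
    using arg_cong[OF E2[of "2*N" N k], of real] by (simp add: of_nat_sum)
  have cardO: "real (card ?O) = M" unfolding M_def by (simp add: card_Om)
  have "(\<Sum>f\<in>?O. (sx N f k - ?P)^2) = (\<Sum>f\<in>?O. ?c f ^ 2 / real N ^ 2 - 2 * ?P * (?c f / real N) + ?P ^ 2)"
    using assms by (intro sum.cong refl) (simp add: sx_def power2_diff power_divide)
  also have "\<dots> = (\<Sum>f\<in>?O. ?c f ^ 2) / real N ^ 2 - 2 * ?P * ((\<Sum>f\<in>?O. ?c f) / real N) + ?P ^ 2 * M"
    by (simp add: sum.distrib sum_subtractf sum_divide_distrib[symmetric] sum_distrib_left[symmetric] cardO)
  finally have e: "(\<Sum>f\<in>?O. (sx N f k - ?P)^2) = (\<Sum>f\<in>?O. ?c f ^ 2) / real N ^ 2 - 2 * ?P * ((\<Sum>f\<in>?O. ?c f) / real N) + ?P ^ 2 * M" .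
  have p: "pN N k = real ((2*N) choose k) * real (N-1)^(2*N-k) / M" unfolding pN_def M_def by simp
  have q: "qN N k = real ((2*N) choose k) * real ((2*N-k) choose k) * real (N-2)^(2*N-2*k) / M" unfolding qN_def M_def by simp
  have r: "real (N - 1) = real N - 1" using assms by (simp add: of_nat_diff)
  show ?thesis unfolding V_def e s1 s2 p q M_def[symmetric] r using NP M0
    by (simp add: field_simps power2_eq_square)
qed

lemma lim_V: "(\<lambda>N. V N k) \<longlonglongrightarrow> 0"
proof -
  let ?P = "poisson2 k"
  have "(\<lambda>N. pN N k * (1 / real N) + (1 - 1 / real N) * qN N k - 2 * ?P * pN N k + ?P ^ 2)
     \<longlonglongrightarrow> ?P * 0 + (1 - 0) * ?P ^ 2 - 2 * ?P * ?P + ?P ^ 2"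
    by (intro tendsto_intros lim_pN lim_qN)
  then have "(\<lambda>N. pN N k * (1 / real N) + (1 - 1 / real N) * qN N k - 2 * ?P * pN N k + ?P ^ 2) \<longlonglongrightarrow> 0"
    by (simp add: power2_eq_square)
  moreover have "\<forall>\<^sub>F N in sequentially. pN N k * (1 / real N) + (1 - 1 / real N) * qN N k - 2 * ?P * pN N k + ?P ^ 2 = V N k"
    by (rule eventually_sequentiallyI[of "k + 1"]) (simp add: V_eq)
  ultimately show ?thesis by (rule Lim_transform_eventually)
qed

definition T :: "nat \<Rightarrow> nat \<Rightarrow> (nat \<Rightarrow> nat) \<Rightarrow> real" where
  "T K N f = (\<Sum>k\<le>2*N. if K < k then (real k + 1)^2 * sx N f k else 0)"

lemma T_nonneg: "T K N f \<ge> 0" unfolding T_def using sx_nonneg by (intro sum_nonneg) auto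

lemma T_pt:
  assumes "N \<ge> 1"
  shows "T K N f \<le> (\<Sum>i<N. 8 ^ cnt (2*N) f i / real N) / (real K + 1)"
proof -
  have "T K N f \<le> (\<Sum>k\<le>2*N. 8 ^ k * sx N f k / (real K + 1))"
    unfolding T_def
  proof (intro sum_mono)
    fix k assume "k \<in> {..2*N}"
    show "(if K < k then (real k + 1)^2 * sx N f k else 0) \<le> 8 ^ k * sx N f k / (real K + 1)"
    proof (cases "K < k")
      case True
      have "(real k + 1)^2 * (real K + 1) \<le> (real k + 1)^2 * (real k + 1)"
        using True by (intro mult_left_mono) auto
      also have "\<dots> = (real k + 1)^3" by (simp add: power3_eq_cube power2_eq_square)
      also have "\<dots> \<le> 8 ^ k" by (rule sq_le_8)
      finally have "(real k + 1)^2 * (real K + 1) \<le> 8 ^ k" .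
      then have "(real k + 1)^2 \<le> 8 ^ k / (real K + 1)" by (simp add: field_simps)
      then have "(real k + 1)^2 * sx N f k \<le> 8 ^ k / (real K + 1) * sx N f k"
        using sx_nonneg by (intro mult_right_mono) auto
      then show ?thesis using True by simp
    next
      case False then show ?thesis using sx_nonneg[of N f k] by simp
    qed
  qed
  also have "\<dots> = (\<Sum>k\<le>2*N. (8 ^ k / real N) * real (Ck (2*N) N f k)) / (real K + 1)"
    unfolding sum_divide_distrib by (intro sum.cong refl) (simp add: sx_def)
  also have "\<dots> = (\<Sum>i<N. 8 ^ cnt (2*N) f i / real N) / (real K + 1)"
    by (subst weighted_Ck) simp
  finally show ?thesis .
qed

lemma div_aux: "(M::real) > 0 \<Longrightarrow> c > 0 \<Longrightarrow> S \<le> X / c \<Longrightarrow> S / M \<le> (X / M) / c"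
  by (simp add: field_simps)

lemma T_sum:
  assumes "N \<ge> 1"
  shows "(\<Sum>f\<in>Om (2*N) N. T K N f) / real N ^ (2*N) \<le> exp 14 / (real K + 1)"
proof -
  have NP: "real N > 0" using assms by simp
  have "(\<Sum>f\<in>Om (2*N) N. T K N f) \<le> (\<Sum>f\<in>Om (2*N) N. (\<Sum>i<N. 8 ^ cnt (2*N) f i / real N) / (real K + 1))"
    by (intro sum_mono T_pt assms)
  also have "\<dots> = (\<Sum>f\<in>Om (2*N) N. \<Sum>i<N. (8::real) ^ cnt (2*N) f i) / real N / (real K + 1)"
    by (simp add: sum_divide_distrib)
  also have "(\<Sum>f\<in>Om (2*N) N. \<Sum>i<N. (8::real) ^ cnt (2*N) f i) = (\<Sum>i<N. \<Sum>f\<in>Om (2*N) N. (8::real) ^ cnt (2*N) f i)"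
    by (rule sum.swap)
  also have "\<dots> = (\<Sum>i<N. real ((N + 7) ^ (2*N)))"
  proof (intro sum.cong refl)
    fix i assume "i \<in> {..<N}"
    then show "(\<Sum>f\<in>Om (2*N) N. (8::real) ^ cnt (2*N) f i) = real ((N + 7) ^ (2*N))"
      using arg_cong[OF E3b[of 8 i N "2*N"], of real] by (simp add: of_nat_sum)
  qed
  also have "(\<Sum>i<N. real ((N + 7) ^ (2*N))) / real N / (real K + 1) = real (N + 7) ^ (2*N) / (real K + 1)" using NP by simp
  finally have 0: "(\<Sum>f\<in>Om (2*N) N. T K N f) \<le> real (N + 7) ^ (2*N) / (real K + 1)" .
  have 1: "(\<Sum>f\<in>Om (2*N) N. T K N f) / real N ^ (2*N) \<le> (real (N + 7) ^ (2*N) / real N ^ (2*N)) / (real K + 1)"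
    by (rule div_aux[OF _ _ 0]) (use NP in auto)
  have "1 + 7 / real N = real (N + 7) / real N" using NP by (simp add: field_simps)
  then have "real (N + 7) ^ (2*N) / real N ^ (2*N) = (1 + 7 / real N) ^ (2*N)"
    by (simp add: power_divide)
  also have "\<dots> \<le> exp (7 / real N) ^ (2*N)"
    by (intro power_mono) (use exp_ge_add_one_self[of "7 / real N"] in auto)
  also have "\<dots> = exp 14" using NP by (simp add: exp_of_nat_mult[symmetric])
  finally have 2: "real (N + 7) ^ (2*N) / real N ^ (2*N) \<le> exp 14" .
  show ?thesis using order.trans[OF 1 divide_right_mono[OF 2]] by simp
qed



definition prb :: "real \<Rightarrow> nat \<Rightarrow> real" where
  "prb \<epsilon> N = measure_pmf.prob (multinomial_pmf (2 * N) N)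
            {Y. (\<Sum>k. (real k + 1)^2 * \<bar>xi N Y k - poisson2 k\<bar>) > \<epsilon>}"

lemma prb_eq:
  assumes "N \<ge> 1"
  shows "prb \<epsilon> N = real (card {f \<in> Om (2*N) N. (\<Sum>k. (real k + 1)^2 * \<bar>sx N f k - poisson2 k\<bar>) > \<epsilon>}) / real N ^ (2*N)"
  unfolding prb_def prob_eq[OF assms] by (simp add: xi_Yf)

lemma cube_aux: "(c::real) > 0 \<Longrightarrow> c * (c^2 * (e / (3 * c^3))) = e / 3"
  by (simp add: power3_eq_cube power2_eq_square field_simps)

lemma main_est:
  assumes eps: "\<epsilon> > 0" and N: "N \<ge> 1" and K: "K \<le> 2*N" and R: "(\<Sum>i. w (i + Suc K)) < \<epsilon>/3"
  defines "\<delta> \<equiv> \<epsilon> / (3 * (real K + 1)^3)"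
  shows "prb \<epsilon> N \<le> (\<Sum>k\<le>K. V N k / \<delta>^2) + exp 14 / (real K + 1) / (\<epsilon>/3)"
proof -
  let ?O = "Om (2*N) N"
  let ?S = "\<lambda>f. (\<Sum>k. (real k + 1)^2 * \<bar>sx N f k - poisson2 k\<bar>)"
  let ?A = "\<lambda>k. {f\<in>?O. \<delta>^2 \<le> (sx N f k - poisson2 k)^2}"
  let ?B = "{f\<in>?O. \<epsilon>/3 \<le> T K N f}"
  define M where "M = real N ^ (2*N)"
  have M0: "M > 0" unfolding M_def using N by simp
  have d0: "\<delta> > 0" unfolding \<delta>_def using eps by simp
  have sub: "{f \<in> ?O. ?S f > \<epsilon>} \<subseteq> (\<Union>k\<le>K. ?A k) \<union> ?B"
  proof
    fix f assume f: "f \<in> {f \<in> ?O. ?S f > \<epsilon>}"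
    show "f \<in> (\<Union>k\<le>K. ?A k) \<union> ?B"
    proof (rule ccontr)
      assume "f \<notin> (\<Union>k\<le>K. ?A k) \<union> ?B"
      then have a: "\<And>k. k \<le> K \<Longrightarrow> (sx N f k - poisson2 k)^2 < \<delta>^2" and b: "T K N f < \<epsilon>/3"
        using f by (auto simp: not_le)
      have "(\<Sum>k\<le>K. (real k + 1)^2 * \<bar>sx N f k - poisson2 k\<bar>) \<le> (\<Sum>k\<le>K. (real K + 1)^2 * \<delta>)"
      proof (intro sum_mono)
        fix k assume k: "k \<in> {..K}"
        have "\<bar>sx N f k - poisson2 k\<bar> < \<delta>"
          using power2_less_imp_less[of "\<bar>sx N f k - poisson2 k\<bar>" \<delta>] a[of k] k d0 by simp
        moreover have "(real k + 1)^2 \<le> (real K + 1)^2" using k by (intro power_mono) auto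
        ultimately show "(real k + 1)^2 * \<bar>sx N f k - poisson2 k\<bar> \<le> (real K + 1)^2 * \<delta>"
          by (intro mult_mono) auto
      qed
      also have "\<dots> = \<epsilon>/3" unfolding \<delta>_def using cube_aux[of "real K + 1" \<epsilon>] by (simp add: add.commute)
      finally have h: "(\<Sum>k\<le>K. (real k + 1)^2 * \<bar>sx N f k - poisson2 k\<bar>) \<le> \<epsilon>/3" .
      have "?S f \<le> (\<Sum>k\<le>K. (real k + 1)^2 * \<bar>sx N f k - poisson2 k\<bar>) + T K N f + (\<Sum>i. w (i + Suc K))"
        using S_bound[OF K, of f] unfolding T_def by simp
      then show False using f h b R by auto
    qed
  qed
  have "real (card {f \<in> ?O. ?S f > \<epsilon>}) \<le> real (card ((\<Union>k\<le>K. ?A k) \<union> ?B))"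
    by (intro of_nat_mono card_mono sub) auto
  also have "\<dots> \<le> real (card (\<Union>k\<le>K. ?A k)) + real (card ?B)"
    using card_Un_le by (simp flip: of_nat_add)
  also have "real (card (\<Union>k\<le>K. ?A k)) \<le> (\<Sum>k\<le>K. real (card (?A k)))"
    using card_UN_le[of "{..K}" ?A] by (simp flip: of_nat_sum)
  also have "(\<Sum>k\<le>K. real (card (?A k))) \<le> (\<Sum>k\<le>K. (\<Sum>f\<in>?O. (sx N f k - poisson2 k)^2) / \<delta>^2)"
    by (intro sum_mono markov_card) (use d0 in auto)
  also have "\<dots> = (\<Sum>k\<le>K. V N k / \<delta>^2) * M"
    unfolding V_def M_def sum_distrib_right using M0 by (intro sum.cong refl) (simp add: M_def)
  also have "real (card ?B) \<le> (\<Sum>f\<in>?O. T K N f) / (\<epsilon>/3)"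
    by (intro markov_card) (use eps T_nonneg in auto)
  also have "(\<Sum>f\<in>?O. T K N f) / (\<epsilon>/3) \<le> (exp 14 / (real K + 1) * M) / (\<epsilon>/3)"
  proof -
    have "(\<Sum>f\<in>?O. T K N f) \<le> exp 14 / (real K + 1) * M"
      using T_sum[OF N, of K] M0 unfolding M_def by (simp add: field_simps)
    then show ?thesis using eps by (intro divide_right_mono) auto
  qed
  finally have "real (card {f \<in> ?O. ?S f > \<epsilon>}) \<le> ((\<Sum>k\<le>K. V N k / \<delta>^2) + exp 14 / (real K + 1) / (\<epsilon>/3)) * M"
    by (simp add: algebra_simps)
  then show ?thesis unfolding prb_eq[OF N] M_def[symmetric] using M0 by (simp add: field_simps)
qed

lemma tail_aux: "(c::real) > 0 \<Longrightarrow> e > 0 \<Longrightarrow> 6 * x < c * (e * h) \<Longrightarrow> x / c / (e/3) < h/2"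
  by (simp add: field_simps)

theorem lemma2p2:
  fixes \<epsilon> :: real
  assumes "\<epsilon> > 0"
  shows "(\<lambda>N. measure_pmf.prob (multinomial_pmf (2 * N) N)
            {Y. (\<Sum>k. (real k + 1)^2 * \<bar>xi N Y k - poisson2 k\<bar>) > \<epsilon>})
         \<longlonglongrightarrow> 0"
proof -
  have "(\<lambda>N. prb \<epsilon> N) \<longlonglongrightarrow> 0"
  proof (rule order_tendstoI)
    fix a :: real assume "a < 0"
    then show "\<forall>\<^sub>F N in sequentially. a < prb \<epsilon> N"
      unfolding prb_def by (intro always_eventually allI) (auto intro: less_le_trans[OF _ measure_nonneg])
  next
    fix \<eta> :: real assume eta: "\<eta> > 0"
    have e3: "\<epsilon>/3 > 0" using assms by simp
    obtain K0 where K0: "\<forall>n\<ge>K0. norm (\<Sum>i. w (i + n)) < \<epsilon>/3"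
      using suminf_exist_split[OF e3 summable_w] by blast
    define K where "K = max K0 (nat \<lceil>6 * exp 14 / (\<epsilon> * \<eta>)\<rceil>)"
    have R: "(\<Sum>i. w (i + Suc K)) < \<epsilon>/3"
    proof -
      have "K0 \<le> Suc K" unfolding K_def by simp
      then have "norm (\<Sum>i. w (i + Suc K)) < \<epsilon>/3" using K0 by blast
      then show ?thesis by simp
    qed
    have Kge: "real K \<ge> 6 * exp 14 / (\<epsilon> * \<eta>)" unfolding K_def
      using real_nat_ceiling_ge[of "6 * exp 14 / (\<epsilon> * \<eta>)"] of_nat_mono[OF max.cobounded2[of "nat \<lceil>6 * exp 14 / (\<epsilon> * \<eta>)\<rceil>" K0]]
      by linarith
    have tail: "exp 14 / (real K + 1) / (\<epsilon>/3) < \<eta>/2"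
    proof -
      have "6 * exp 14 \<le> real K * (\<epsilon> * \<eta>)" using Kge assms eta by (simp add: field_simps)
      moreover have "0 < \<epsilon> * \<eta>" using assms eta by simp
      ultimately have "6 * exp 14 < (real K + 1) * (\<epsilon> * \<eta>)" by (simp add: algebra_simps)
      then show ?thesis using tail_aux[of "real K + 1" \<epsilon> "exp 14" \<eta>] assms by simp
    qed
    define \<delta> where "\<delta> = \<epsilon> / (3 * (real K + 1)^3)"
    have "(\<lambda>N. \<Sum>k\<le>K. V N k / \<delta>^2) \<longlonglongrightarrow> (\<Sum>k\<le>K. 0 / \<delta>^2)"
      by (intro tendsto_intros lim_V) (use assms in \<open>simp add: \<delta>_def\<close>)
    then have "(\<lambda>N. \<Sum>k\<le>K. V N k / \<delta>^2) \<longlonglongrightarrow> 0" by simp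
    then have ev1: "\<forall>\<^sub>F N in sequentially. (\<Sum>k\<le>K. V N k / \<delta>^2) < \<eta>/2"
      using eta by (intro order_tendstoD(2)) auto
    have ev2: "\<forall>\<^sub>F N in sequentially. K + 1 \<le> N" by (rule eventually_ge_at_top)
    show "\<forall>\<^sub>F N in sequentially. prb \<epsilon> N < \<eta>"
      using ev1 ev2
    proof eventually_elim
      case (elim N)
      have "prb \<epsilon> N \<le> (\<Sum>k\<le>K. V N k / \<delta>^2) + exp 14 / (real K + 1) / (\<epsilon>/3)"
        unfolding \<delta>_def using elim by (intro main_est assms R) auto
      then show ?case using elim tail by linarith
    qed
  qed
  then show ?thesis unfolding prb_def .
qed


end
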